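(* Let $V$ be a finite set whose elements carry positive weights, and for $A \subseteq V$ let $\vert A \vert$ denote the total weight of $A$. Let $\mathcal{P}$ and $\mathcal{P}'$ be partitions of $V$ into nonempty parts, and define $\phi_{\mathcal{P}'} : 2^{\mathcal{P}} \to \mathbb{R}$ by $$\phi_{\mathcal{P}'}(\mathcal{S}) = \sum_{P' \in \mathcal{P}'} \vert P' \vert \operatorname{peak}\Big(\frac{\vert U_{\mathcal{S}} \cap P' \vert}{\vert P' \vert}\Big),$$ where $U_{\mathcal{S}}$ is the union of the sets in $\mathcal{S}$ and $\operatorname{peak}(x) = x$ for $x \le 1/2$, $\operatorname{peak}(x) = 1-x$ for $x > 1/2$. Then $\phi_{\mathcal{P}'}$ is symmetric and submodular.
   Context: A function $\Pi : 2^{\mathcal{P}} \to \mathbb{R}$ is symmetric if $\Pi(\mathcal{S}) = \Pi(\mathcal{P} \setminus \mathcal{S})$ for all $\mathcal{S} \subseteq \mathcal{P}$, and submodular if $\Pi(\mathcal{S}_1 \cup \mathcal{S}_2) \le \Pi(\mathcal{S}_1) + \Pi(\mathcal{S}_2) - \Pi(\mathcal{S}_1 \cap \mathcal{S}_2)$ for all $\mathcal{S}_1, \mathcal{S}_2 \subseteq \mathcal{P}$. *)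

theory Defs
  imports Main "HOL-Library.Disjoint_Sets" Complex_Main
begin

definition peak :: "real \<Rightarrow> real" where
  "peak x = (if x \<le> 1/2 then x else 1 - x)"

definition wt :: "('a \<Rightarrow> real) \<Rightarrow> 'a set \<Rightarrow> real" where
  "wt w A = (\<Sum>a\<in>A. w a)"

definition phi :: "('a \<Rightarrow> real) \<Rightarrow> 'a set set \<Rightarrow> 'a set set \<Rightarrow> real" where
  "phi w P' S = (\<Sum>Q\<in>P'. wt w Q * peak (wt w (\<Union>S \<inter> Q) / wt w Q))"

definition symmetric_on :: "'b set \<Rightarrow> ('b set \<Rightarrow> real) \<Rightarrow> bool" where
  "symmetric_on P f \<longleftrightarrow> (\<forall>S. S \<subseteq> P \<longrightarrow> f S = f (P - S))"

definition submodular_on :: "'b set \<Rightarrow> ('b set \<Rightarrow> real) \<Rightarrow> bool" where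
  "submodular_on P f \<longleftrightarrow> (\<forall>S1 S2. S1 \<subseteq> P \<longrightarrow> S2 \<subseteq> P \<longrightarrow>
      f (S1 \<union> S2) \<le> f S1 + f S2 - f (S1 \<inter> S2))"

end

theory Submission
  imports Defs
begin

lemma peak_sym: "peak (1 - x) = peak x"
  unfolding peak_def by auto

lemma min_ineq:
  fixes a b c d t :: real
  assumes "d \<le> a" "a \<le> c" "d \<le> b" "b \<le> c" "c + d = a + b"
  shows "min c (t-c) + min d (t-d) \<le> min a (t-a) + min b (t-b)"
  using assms unfolding min_def by (auto split: if_splits)

lemma tpeak: "(t::real) > 0 \<Longrightarrow> t * peak (x / t) = min x (t - x)"
  unfolding peak_def by (auto simp: min_def field_simps)

lemma part_mem:
  assumes "partition_on V P" "x \<in> A" "A \<in> P" "B \<in> P" "x \<in> B"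
  shows "A = B"
  using assms disjointD[of P A B] unfolding partition_on_def by blast

theorem proposition2:
  fixes V :: "'a set" and w :: "'a \<Rightarrow> real" and P P' :: "'a set set"
  assumes "finite V"
    and "\<forall>v\<in>V. w v > 0"
    and "partition_on V P"
    and "partition_on V P'"
  shows "symmetric_on P (phi w P') \<and> submodular_on P (phi w P')"
proof
  have QV: "Q \<subseteq> V" if "Q \<in> P'" for Q
    using assms(4) that unfolding partition_on_def by blast
  have Qfin: "finite Q" if "Q \<in> P'" for Q
    using QV[OF that] assms(1) finite_subset by blast
  have wnn: "wt w X \<ge> 0" if "X \<subseteq> V" for X
    unfolding wt_def using that assms(2) by (intro sum_nonneg) (auto intro: less_imp_le)
  have PV: "\<Union>P = V" using assms(3) unfolding partition_on_def by blast
  show "symmetric_on P (phi w P')"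
    unfolding symmetric_on_def
  proof (intro allI impI)
    fix S assume S: "S \<subseteq> P"
    have eq: "\<Union>(P - S) \<inter> Q = Q - (\<Union>S \<inter> Q)" if "Q \<in> P'" for Q
    proof (intro set_eqI iffI)
      fix x assume "x \<in> \<Union>(P - S) \<inter> Q"
      then obtain A where A: "A \<in> P" "A \<notin> S" "x \<in> A" "x \<in> Q" by blast
      have "x \<notin> \<Union>S"
      proof
        assume "x \<in> \<Union>S"
        then obtain B where "B \<in> S" "x \<in> B" by blast
        with A S part_mem[OF assms(3)] show False by blast
      qed
      with A show "x \<in> Q - (\<Union>S \<inter> Q)" by blast
    next
      fix x assume x: "x \<in> Q - (\<Union>S \<inter> Q)"
      then have "x \<in> V" using QV[OF that] by blast
      then obtain A where "A \<in> P" "x \<in> A" using PV by blast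
      with x show "x \<in> \<Union>(P - S) \<inter> Q" by blast
    qed
    have "wt w Q * peak (wt w (\<Union>S \<inter> Q) / wt w Q)
        = wt w Q * peak (wt w (\<Union>(P - S) \<inter> Q) / wt w Q)" if "Q \<in> P'" for Q
    proof (cases "wt w Q = 0")
      case False
      have "wt w (\<Union>(P - S) \<inter> Q) = wt w Q - wt w (\<Union>S \<inter> Q)"
        unfolding eq[OF that] wt_def using Qfin[OF that]
        by (intro sum_diff) auto
      then have "wt w (\<Union>(P - S) \<inter> Q) / wt w Q = 1 - wt w (\<Union>S \<inter> Q) / wt w Q"
        using False by (simp add: field_simps)
      then show ?thesis by (simp only: peak_sym)
    qed simp
    then show "phi w P' S = phi w P' (P - S)"
      unfolding phi_def by (rule sum.cong[OF refl])
  qed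
  show "submodular_on P (phi w P')"
    unfolding submodular_on_def
  proof (intro allI impI)
    fix S1 S2 assume S1: "S1 \<subseteq> P" and S2: "S2 \<subseteq> P"
    have U: "\<Union>(S1 \<union> S2) = \<Union>S1 \<union> \<Union>S2" by blast
    have I: "\<Union>(S1 \<inter> S2) = \<Union>S1 \<inter> \<Union>S2"
    proof (intro set_eqI iffI)
      fix x assume "x \<in> \<Union>S1 \<inter> \<Union>S2"
      then obtain A B where "A \<in> S1" "B \<in> S2" "x \<in> A" "x \<in> B" by blast
      moreover have "A = B" using S1 S2 part_mem[OF assms(3) \<open>x \<in> A\<close> _ _ \<open>x \<in> B\<close>] \<open>A \<in> S1\<close> \<open>B \<in> S2\<close> by blast
      ultimately show "x \<in> \<Union>(S1 \<inter> S2)" by blast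
    qed blast
    define U1 where "U1 = \<Union>S1"
    define U2 where "U2 = \<Union>S2"
    have termQ: "wt w Q * peak (wt w ((U1 \<union> U2) \<inter> Q) / wt w Q)
       + wt w Q * peak (wt w ((U1 \<inter> U2) \<inter> Q) / wt w Q)
       \<le> wt w Q * peak (wt w (U1 \<inter> Q) / wt w Q) + wt w Q * peak (wt w (U2 \<inter> Q) / wt w Q)"
      if Q: "Q \<in> P'" for Q
    proof (cases "wt w Q = 0")
      case False
      then have t: "wt w Q > 0" using wnn[OF QV[OF Q]] by linarith
      have fin: "finite (X \<inter> Q)" for X using Qfin[OF Q] by blast
      have mono: "wt w X \<le> wt w Y" if "X \<subseteq> Y" "Y \<subseteq> Q" for X Y
      proof -
        have fY: "finite Y" using finite_subset[OF that(2) Qfin[OF Q]] .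
        have "\<forall>b\<in>Y - X. 0 \<le> w b"
        proof
          fix b assume "b \<in> Y - X"
          then have "b \<in> V" using that(2) QV[OF Q] by blast
          then show "0 \<le> w b" using assms(2) by (simp add: less_imp_le)
        qed
        then show ?thesis unfolding wt_def using sum_mono2[OF fY that(1)] by blast
      qed
      have add: "wt w ((U1 \<union> U2) \<inter> Q) + wt w ((U1 \<inter> U2) \<inter> Q) = wt w (U1 \<inter> Q) + wt w (U2 \<inter> Q)"
      proof -
        have "(U1 \<union> U2) \<inter> Q = (U1 \<inter> Q) \<union> (U2 \<inter> Q)" "(U1 \<inter> U2) \<inter> Q = (U1 \<inter> Q) \<inter> (U2 \<inter> Q)" by blast+
        then show ?thesis unfolding wt_def using sum.union_inter[OF fin fin] by simp
      qed
      show ?thesis unfolding tpeak[OF t]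
        by (rule min_ineq) (auto intro!: mono simp: add)
    qed simp
    show "phi w P' (S1 \<union> S2) \<le> phi w P' S1 + phi w P' S2 - phi w P' (S1 \<inter> S2)"
      unfolding phi_def U I U1_def[symmetric] U2_def[symmetric]
      using sum_mono[OF termQ] by (simp add: sum.distrib algebra_simps)
  qed
qed

end
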